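(* Let $G$ be a graph with $L(G)=2l(G)$. Let $F_L, F_l$ be maximum matchings of $G$ with $\nu(G\setminus F_L)=L(G)$ and $\nu(G\setminus F_l)=l(G)$, and let $H_L$ be any maximum matching of $G\setminus F_L$. Then: (c1) $F_l\setminus F_L\subseteq H_L$; (c2) $H_L\setminus F_l$ is a maximum matching of $G\setminus F_l$; (c3) $F_L\setminus F_l$ is a maximum matching of $G\setminus F_l$.
   Context: Graphs are finite, undirected, without loops or multiple edges. $\nu(G)$ denotes the maximum size of a matching of $G$; a matching is maximum if it has $\nu(G)$ edges. For $F\subseteq E(G)$, $G\setminus F$ is the graph with vertex set $V(G)$ and edge set $E(G)\setminus F$. Define $L(G)=\max\{\nu(G\setminus F): F \text{ a maximum matching of } G\}$ and $l(G)=\min\{\nu(G\setminus F): F \text{ a maximum matching of } G\}$. *)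

theory Defs
  imports Main
begin

text \<open>A finite simple graph on vertex set V with edge set E: every edge is a
  2-element subset of V (so no loops; multiple edges impossible since E is a set).\<close>
definition graph :: "'a set \<Rightarrow> 'a set set \<Rightarrow> bool" where
  "graph V E \<longleftrightarrow> finite V \<and> (\<forall>e\<in>E. e \<subseteq> V \<and> card e = 2)"

definition matching :: "'a set set \<Rightarrow> 'a set set \<Rightarrow> bool" where
  "matching E M \<longleftrightarrow> M \<subseteq> E \<and> (\<forall>e1\<in>M. \<forall>e2\<in>M. e1 \<noteq> e2 \<longrightarrow> e1 \<inter> e2 = {})"

text \<open>nu(G): maximum size of a matching. (G minus F has the same vertex set and
  edge set E - F; matchings depend only on the edge set.)\<close>
definition nu :: "'a set set \<Rightarrow> nat" where
  "nu E = Max {card M | M. matching E M}"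

definition max_matching :: "'a set set \<Rightarrow> 'a set set \<Rightarrow> bool" where
  "max_matching E M \<longleftrightarrow> matching E M \<and> card M = nu E"

definition L_num :: "'a set set \<Rightarrow> nat" where
  "L_num E = Max {nu (E - F) | F. max_matching E F}"

definition l_num :: "'a set set \<Rightarrow> nat" where
  "l_num E = Min {nu (E - F) | F. max_matching E F}"

end

theory Submission
  imports Defs
begin

lemma matching_le_nu:
  assumes "finite E" "matching E M"
  shows "card M \<le> nu E"
proof -
  have "{card M | M. matching E M} \<subseteq> card ` Pow E"
    unfolding matching_def by auto
  moreover have "finite (card ` Pow E)" using assms(1) by simp
  ultimately have "finite {card M | M. matching E M}"
    by (rule finite_subset)
  thus ?thesis unfolding nu_def using assms(2) by (auto intro: Max_ge)
qed

lemma matching_subset: "matching E M \<Longrightarrow> M' \<subseteq> M \<Longrightarrow> M' \<subseteq> E' \<Longrightarrow> matching E' M'"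
  unfolding matching_def by blast

theorem theorem2:
  fixes V :: "'a set" and E FL Fl HL :: "'a set set"
  assumes "graph V E"
    and "L_num E = 2 * l_num E"
    and "max_matching E FL" and "nu (E - FL) = L_num E"
    and "max_matching E Fl" and "nu (E - Fl) = l_num E"
    and "max_matching (E - FL) HL"
  shows "Fl - FL \<subseteq> HL \<and> max_matching (E - Fl) (HL - Fl) \<and> max_matching (E - Fl) (FL - Fl)"
proof -
  have fE: "finite E" using assms(1) unfolding graph_def
  proof -
    have "E \<subseteq> Pow V" using assms(1) unfolding graph_def by auto
    thus ?thesis using assms(1) unfolding graph_def by (meson finite_Pow_iff finite_subset)
  qed
  have FLm: "matching E FL" "card FL = nu E" using assms(3) unfolding max_matching_def by auto
  have Flm: "matching E Fl" "card Fl = nu E" using assms(5) unfolding max_matching_def by auto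
  have HLm: "matching (E - FL) HL" "card HL = L_num E" using assms(7,4) unfolding max_matching_def by auto
  have fFL: "finite FL" using FLm fE unfolding matching_def by (meson finite_subset)
  have fFl: "finite Fl" using Flm fE unfolding matching_def by (meson finite_subset)
  have fHL: "finite HL" using HLm fE unfolding matching_def by (meson finite_subset finite_Diff)
  have HL_sub: "HL \<subseteq> E - FL" using HLm unfolding matching_def by auto
  have m1: "matching (E - Fl) (HL - Fl)"
    using matching_subset[OF HLm(1), of "HL - Fl" "E - Fl"] HL_sub by auto
  have m2: "matching (E - Fl) (FL - Fl)"
  proof (rule matching_subset[OF FLm(1)])
    have "FL \<subseteq> E" using FLm(1) unfolding matching_def by simp
    thus "FL - Fl \<subseteq> E - Fl" by blast
  qed simp
  have c1: "card (HL - Fl) \<le> l_num E" using matching_le_nu[OF _ m1] fE assms(6) by auto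
  have c2: "card (FL - Fl) \<le> l_num E" using matching_le_nu[OF _ m2] fE assms(6) by auto
  have eqc: "card (Fl - FL) = card (FL - Fl)"
  proof -
    have "card (Fl - FL) = card Fl - card (Fl \<inter> FL)"
      by (rule card_Diff_subset_Int) (use fFl in simp)
    moreover have "card (FL - Fl) = card FL - card (FL \<inter> Fl)"
      by (rule card_Diff_subset_Int) (use fFL in simp)
    moreover have "Fl \<inter> FL = FL \<inter> Fl" by blast
    ultimately show ?thesis using FLm(2) Flm(2) by simp
  qed
  have split: "card HL = card (HL \<inter> Fl) + card (HL - Fl)"
    using card_Int_Diff[OF fHL, of Fl] by simp
  have sub: "HL \<inter> Fl \<subseteq> Fl - FL" using HL_sub by auto
  have c3: "card (HL \<inter> Fl) \<le> card (Fl - FL)" using card_mono[OF _ sub] fFl by auto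
  have tot: "card HL = 2 * l_num E" using HLm(2) assms(2) by simp
  have e1: "card (HL \<inter> Fl) = card (Fl - FL)" and e2: "card (HL - Fl) = l_num E"
    and e3: "card (FL - Fl) = l_num E"
    using split c1 c2 c3 eqc tot by linarith+
  have "HL \<inter> Fl = Fl - FL" using card_subset_eq[OF _ sub e1] fFl by auto
  hence "Fl - FL \<subseteq> HL" by auto
  thus ?thesis using m1 m2 e2 e3 assms(6) unfolding max_matching_def by auto
qed

end
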